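(* Let $U:\mathbb{C}^*\to\mathbb{C}$ be a reasonable expansion with unique restrictions, between locally small categories, which has the expansion property, and assume that all morphisms in $\mathbb{C}$ are monomorphisms and that $\mathbb{C}^*$ is directed. Then for every $A\in\mathrm{Ob}(\mathbb{C})$, $$t_{\mathbb{C}}(A)=\sum_{\mathcal{A}\in U^{-1}(A)}t_{\mathbb{C}^*}(\mathcal{A}).$$ Consequently, $t_{\mathbb{C}}(A)$ is finite if and only if $U^{-1}(A)$ is finite and $t_{\mathbb{C}^*}(\mathcal{A})<\infty$ for all $\mathcal{A}\in U^{-1}(A)$.
   Context: Write $X\to Y$ if $\hom(X,Y)\ne\varnothing$; a category is directed if for all objects $A,B$ there is $C$ with $A\to C$, $B\to C$. An expansion of $\mathbb{C}$ is a category $\mathbb{C}^*$ with a functor $U:\mathbb{C}^*\to\mathbb{C}$ surjective on objects and injective on hom-sets; we regard $\hom_{\mathbb{C}^*}(\mathcal{A},\mathcal{B})\subseteq\hom_{\mathbb{C}}(U\mathcal{A},U\mathcal{B})$, and $U^{-1}(A)=\{\mathcal{A}:U(\mathcal{A})=A\}$. $U$ is reasonable if for every $e\in\hom(A,B)$ and $\mathcal{A}\in U^{-1}(A)$ there is $\mathcal{B}\in U^{-1}(B)$ with $e\in\hom(\mathcal{A},\mathcal{B})$; it has unique restrictions if for every $\mathcal{B}$ and $e\in\hom(A,U(\mathcal{B}))$ there is exactly one $\mathcal{A}\in U^{-1}(A)$ with $e\in\hom(\mathcal{A},\mathcal{B})$; it has the expansion property if for every $A\in\mathrm{Ob}(\mathbb{C})$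 there is $B\in\mathrm{Ob}(\mathbb{C})$ with $\mathcal{A}\to\mathcal{B}$ for all $\mathcal{A}\in U^{-1}(A)$, $\mathcal{B}\in U^{-1}(B)$. In a category $\mathbb{D}$: $C\to(B)^A_{k,t}$ means that for every $\chi:\hom(A,C)\to\{0,\dots,k-1\}$ there is $w\in\hom(B,C)$ with $|\chi(w\cdot\hom(A,B))|\le t$; $t_{\mathbb{D}}(A)$ is the least positive $n$ such that for all $k\ge2$ and all $B$ there is $C$ with $C\to(B)^A_{k,n}$, and $\infty$ otherwise. A sum with an infinite term or infinitely many terms is $\infty$. *)

theory Defs
  imports Main "HOL-Library.Extended_Nat"
begin

text \<open>A (locally small) category is given by a set of objects Ob, hom-sets
  hom A B, a composition cmp g f (first f, then g) and identities idm A.\<close>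

definition category ::
  "'o set \<Rightarrow> ('o \<Rightarrow> 'o \<Rightarrow> 'm set) \<Rightarrow> ('m \<Rightarrow> 'm \<Rightarrow> 'm) \<Rightarrow> ('o \<Rightarrow> 'm) \<Rightarrow> bool" where
  "category Ob hom cmp idm \<longleftrightarrow>
     (\<forall>A\<in>Ob. \<forall>B\<in>Ob. \<forall>C\<in>Ob. \<forall>f\<in>hom A B. \<forall>g\<in>hom B C. cmp g f \<in> hom A C) \<and>
     (\<forall>A\<in>Ob. \<forall>B\<in>Ob. \<forall>C\<in>Ob. \<forall>D\<in>Ob. \<forall>f\<in>hom A B. \<forall>g\<in>hom B C. \<forall>h\<in>hom C D.
        cmp h (cmp g f) = cmp (cmp h g) f) \<and>
     (\<forall>A\<in>Ob. idm A \<in> hom A A) \<and>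
     (\<forall>A\<in>Ob. \<forall>B\<in>Ob. \<forall>f\<in>hom A B. cmp f (idm A) = f \<and> cmp (idm B) f = f)"

definition arr :: "('o \<Rightarrow> 'o \<Rightarrow> 'm set) \<Rightarrow> 'o \<Rightarrow> 'o \<Rightarrow> bool" where
  "arr hom X Y \<longleftrightarrow> hom X Y \<noteq> {}"

definition directed :: "'o set \<Rightarrow> ('o \<Rightarrow> 'o \<Rightarrow> 'm set) \<Rightarrow> bool" where
  "directed Ob hom \<longleftrightarrow> (\<forall>A\<in>Ob. \<forall>B\<in>Ob. \<exists>C\<in>Ob. arr hom A C \<and> arr hom B C)"

definition all_mono ::
  "'o set \<Rightarrow> ('o \<Rightarrow> 'o \<Rightarrow> 'm set) \<Rightarrow> ('m \<Rightarrow> 'm \<Rightarrow> 'm) \<Rightarrow> bool" where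
  "all_mono Ob hom cmp \<longleftrightarrow>
     (\<forall>A\<in>Ob. \<forall>B\<in>Ob. \<forall>f\<in>hom A B. \<forall>X\<in>Ob. \<forall>g\<in>hom X A. \<forall>h\<in>hom X A.
        cmp f g = cmp f h \<longrightarrow> g = h)"

text \<open>Expansion: C* = (Ob', hom', same composition, identities idm (U a)),
  with hom' a b a subset of hom (U a) (U b) (so U is the inclusion on hom-sets,
  hence injective on hom-sets), U surjective on objects.\<close>

definition expansion ::
  "'o set \<Rightarrow> ('o \<Rightarrow> 'o \<Rightarrow> 'm set) \<Rightarrow> ('m \<Rightarrow> 'm \<Rightarrow> 'm) \<Rightarrow> ('o \<Rightarrow> 'm) \<Rightarrow>
   'p set \<Rightarrow> ('p \<Rightarrow> 'p \<Rightarrow> 'm set) \<Rightarrow> ('p \<Rightarrow> 'o) \<Rightarrow> bool" where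
  "expansion Ob hom cmp idm Ob' hom' U \<longleftrightarrow>
     category Ob hom cmp idm \<and> category Ob' hom' cmp (\<lambda>a. idm (U a)) \<and>
     U ` Ob' = Ob \<and> (\<forall>a\<in>Ob'. \<forall>b\<in>Ob'. hom' a b \<subseteq> hom (U a) (U b))"

definition fiber :: "'p set \<Rightarrow> ('p \<Rightarrow> 'o) \<Rightarrow> 'o \<Rightarrow> 'p set" where
  "fiber Ob' U A = {a\<in>Ob'. U a = A}"

definition reasonable ::
  "'o set \<Rightarrow> ('o \<Rightarrow> 'o \<Rightarrow> 'm set) \<Rightarrow> 'p set \<Rightarrow> ('p \<Rightarrow> 'p \<Rightarrow> 'm set) \<Rightarrow> ('p \<Rightarrow> 'o) \<Rightarrow> bool" where
  "reasonable Ob hom Ob' hom' U \<longleftrightarrow>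
     (\<forall>A\<in>Ob. \<forall>B\<in>Ob. \<forall>e\<in>hom A B. \<forall>a\<in>fiber Ob' U A. \<exists>b\<in>fiber Ob' U B. e \<in> hom' a b)"

definition unique_restrictions ::
  "'o set \<Rightarrow> ('o \<Rightarrow> 'o \<Rightarrow> 'm set) \<Rightarrow> 'p set \<Rightarrow> ('p \<Rightarrow> 'p \<Rightarrow> 'm set) \<Rightarrow> ('p \<Rightarrow> 'o) \<Rightarrow> bool" where
  "unique_restrictions Ob hom Ob' hom' U \<longleftrightarrow>
     (\<forall>b\<in>Ob'. \<forall>A\<in>Ob. \<forall>e\<in>hom A (U b). \<exists>!a. a \<in> fiber Ob' U A \<and> e \<in> hom' a b)"

definition expansion_property ::
  "'o set \<Rightarrow> 'p set \<Rightarrow> ('p \<Rightarrow> 'p \<Rightarrow> 'm set) \<Rightarrow> ('p \<Rightarrow> 'o) \<Rightarrow> bool" where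
  "expansion_property Ob Ob' hom' U \<longleftrightarrow>
     (\<forall>A\<in>Ob. \<exists>B\<in>Ob. \<forall>a\<in>fiber Ob' U A. \<forall>b\<in>fiber Ob' U B. arr hom' a b)"

definition ramsey_arrow ::
  "('o \<Rightarrow> 'o \<Rightarrow> 'm set) \<Rightarrow> ('m \<Rightarrow> 'm \<Rightarrow> 'm) \<Rightarrow> 'o \<Rightarrow> 'o \<Rightarrow> 'o \<Rightarrow> nat \<Rightarrow> nat \<Rightarrow> bool" where
  "ramsey_arrow hom cmp C B A k t \<longleftrightarrow>
     (\<forall>\<chi> :: 'm \<Rightarrow> nat. \<chi> ` hom A C \<subseteq> {..<k} \<longrightarrow>
        (\<exists>w\<in>hom B C. card (\<chi> ` ((\<lambda>e. cmp w e) ` hom A B)) \<le> t))"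

definition ramsey_good ::
  "'o set \<Rightarrow> ('o \<Rightarrow> 'o \<Rightarrow> 'm set) \<Rightarrow> ('m \<Rightarrow> 'm \<Rightarrow> 'm) \<Rightarrow> 'o \<Rightarrow> nat \<Rightarrow> bool" where
  "ramsey_good Ob hom cmp A n \<longleftrightarrow>
     (\<forall>k\<ge>2. \<forall>B\<in>Ob. \<exists>C\<in>Ob. ramsey_arrow hom cmp C B A k n)"

definition ramsey_degree ::
  "'o set \<Rightarrow> ('o \<Rightarrow> 'o \<Rightarrow> 'm set) \<Rightarrow> ('m \<Rightarrow> 'm \<Rightarrow> 'm) \<Rightarrow> 'o \<Rightarrow> enat" where
  "ramsey_degree Ob hom cmp A =
     (if \<exists>n>0. ramsey_good Ob hom cmp A n
      then enat (LEAST n. n > 0 \<and> ramsey_good Ob hom cmp A n) else \<infinity>)"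

definition esum :: "('a \<Rightarrow> enat) \<Rightarrow> 'a set \<Rightarrow> enat" where
  "esum f S = (if finite S then sum f S else \<infinity>)"

end

theory Submission
  imports Defs
begin

locale ctx =
  fixes Ob :: "'o set" and hom :: "'o \<Rightarrow> 'o \<Rightarrow> 'm set"
    and cmp :: "'m \<Rightarrow> 'm \<Rightarrow> 'm" and idm :: "'o \<Rightarrow> 'm"
    and Ob' :: "'p set" and hom' :: "'p \<Rightarrow> 'p \<Rightarrow> 'm set" and U :: "'p \<Rightarrow> 'o"
  assumes exp: "expansion Ob hom cmp idm Ob' hom' U"
    and ur: "unique_restrictions Ob hom Ob' hom' U"
    and ep: "expansion_property Ob Ob' hom' U"
    and dir: "directed Ob' hom'"
begin

lemma cat: "category Ob hom cmp idm" using exp by (simp add: expansion_def)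
lemma cat': "category Ob' hom' cmp (\<lambda>a. idm (U a))" using exp by (simp add: expansion_def)

lemma comp: "A \<in> Ob \<Longrightarrow> B \<in> Ob \<Longrightarrow> C \<in> Ob \<Longrightarrow> f \<in> hom A B \<Longrightarrow> g \<in> hom B C \<Longrightarrow> cmp g f \<in> hom A C"
  using cat unfolding category_def by blast

lemma comp': assumes "a \<in> Ob'" "b \<in> Ob'" "c \<in> Ob'" "f \<in> hom' a b" "g \<in> hom' b c" shows "cmp g f \<in> hom' a c"
proof -
  have "\<forall>A\<in>Ob'. \<forall>B\<in>Ob'. \<forall>C\<in>Ob'. \<forall>f\<in>hom' A B. \<forall>g\<in>hom' B C. cmp g f \<in> hom' A C"
    using cat' unfolding category_def by (elim conjE)
  then show "?thesis" using assms by blast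
qed

lemma assoc': assumes "a \<in> Ob'" "b \<in> Ob'" "c \<in> Ob'" "d \<in> Ob'" "f \<in> hom' a b" "g \<in> hom' b c"
   "h \<in> hom' c d" shows "cmp h (cmp g f) = cmp (cmp h g) f"
proof -
  have "\<forall>A\<in>Ob'. \<forall>B\<in>Ob'. \<forall>C\<in>Ob'. \<forall>D\<in>Ob'. \<forall>f\<in>hom' A B. \<forall>g\<in>hom' B C. \<forall>h\<in>hom' C D.
        cmp h (cmp g f) = cmp (cmp h g) f"
    using cat' unfolding category_def by (elim conjE)
  then show "?thesis" using assms by blast
qed

lemma id': "a \<in> Ob' \<Longrightarrow> idm (U a) \<in> hom' a a"
  using cat' unfolding category_def by blast

lemma sub: "a \<in> Ob' \<Longrightarrow> b \<in> Ob' \<Longrightarrow> hom' a b \<subseteq> hom (U a) (U b)"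
  using exp unfolding expansion_def by blast

lemma UOb: "a \<in> Ob' \<Longrightarrow> U a \<in> Ob"
  using exp unfolding expansion_def by blast

lemma surjU: "A \<in> Ob \<Longrightarrow> \<exists>a\<in>Ob'. U a = A"
  using exp unfolding expansion_def by blast

lemma UR: "b \<in> Ob' \<Longrightarrow> A \<in> Ob \<Longrightarrow> e \<in> hom A (U b) \<Longrightarrow> \<exists>!a. a \<in> fiber Ob' U A \<and> e \<in> hom' a b"
  using ur unfolding unique_restrictions_def by blast

lemma arr_trans: "x \<in> Ob' \<Longrightarrow> y \<in> Ob' \<Longrightarrow> z \<in> Ob' \<Longrightarrow> arr hom' x y \<Longrightarrow> arr hom' y z \<Longrightarrow> arr hom' x z"
  unfolding arr_def using comp' by blast

lemma dir_fin: "finite S \<Longrightarrow> S \<subseteq> Ob' \<Longrightarrow> Ob' \<noteq> {} \<Longrightarrow> \<exists>c\<in>Ob'. \<forall>x\<in>S. arr hom' x c"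
proof (induction S rule: finite_induct)
  case empty
  then show ?case by blast
next
  case (insert x S)
  then obtain c where c: "c \<in> Ob'" "\<forall>y\<in>S. arr hom' y c" by blast
  obtain d where d: "d \<in> Ob'" "arr hom' x d" "arr hom' c d"
    using dir insert.prems c unfolding directed_def by blast
  show ?case using c d insert.prems arr_trans by blast
qed

lemma chain:
  assumes A: "A \<in> Ob" and fin: "finite G" and G: "G \<subseteq> fiber Ob' U A"
    and good: "\<forall>a\<in>G. ramsey_good Ob' hom' cmp a (t a)" and k: "(k::nat) \<ge> 2"
  shows "\<forall>b\<in>Ob'. \<exists>c\<in>Ob'. \<forall>\<chi>. \<chi> ` hom A (U c) \<subseteq> {..<k} \<longrightarrow>
     (\<exists>v\<in>hom' b c. card (\<chi> ` (cmp v ` (\<Union>a\<in>G. hom' a b))) \<le> sum t G)"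
  using fin G good
proof (induction G rule: finite_induct)
  case empty
  show ?case
  proof (intro ballI)
    fix b assume b: "b \<in> Ob'"
    show "\<exists>c\<in>Ob'. \<forall>\<chi>. \<chi> ` hom A (U c) \<subseteq> {..<k} \<longrightarrow>
     (\<exists>v\<in>hom' b c. card (\<chi> ` (cmp v ` (\<Union>a\<in>{}. hom' a b))) \<le> sum t {})"
      using b id'[OF b] by auto
  qed
next
  case (insert a G)
  have aO: "a \<in> Ob'" "U a = A" using insert.prems unfolding fiber_def by auto
  have goa: "ramsey_good Ob' hom' cmp a (t a)" using insert.prems by auto
  show ?case
  proof (intro ballI)
    fix b assume b: "b \<in> Ob'"
    obtain c1 where c1: "c1 \<in> Ob'" and H1: "\<forall>\<chi>. \<chi> ` hom A (U c1) \<subseteq> {..<k} \<longrightarrow>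
     (\<exists>v\<in>hom' b c1. card (\<chi> ` (cmp v ` (\<Union>a\<in>G. hom' a b))) \<le> sum t G)"
      using insert.IH insert.prems b by blast
    obtain c where c: "c \<in> Ob'" and RA: "ramsey_arrow hom' cmp c c1 a k (t a)"
      using goa k c1 unfolding ramsey_good_def by blast
    show "\<exists>c\<in>Ob'. \<forall>\<chi>. \<chi> ` hom A (U c) \<subseteq> {..<k} \<longrightarrow>
     (\<exists>v\<in>hom' b c. card (\<chi> ` (cmp v ` (\<Union>a\<in>insert a G. hom' a b))) \<le> sum t (insert a G))"
    proof (intro bexI[of _ c] allI impI)
      fix \<chi> assume chi: "\<chi> ` hom A (U c) \<subseteq> {..<k}"
      have "\<chi> ` hom' a c \<subseteq> {..<k}" using chi sub[OF aO(1) c] aO by blast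
      then obtain u where u: "u \<in> hom' c1 c" and cu: "card (\<chi> ` (cmp u ` hom' a c1)) \<le> t a"
        using RA unfolding ramsey_arrow_def by blast
      have uh: "u \<in> hom (U c1) (U c)" using u sub[OF c1 c] by blast
      define \<chi>' where "\<chi>' = (\<lambda>e. \<chi> (cmp u e))"
      have "\<chi>' ` hom A (U c1) \<subseteq> {..<k}"
      proof
        fix x assume "x \<in> \<chi>' ` hom A (U c1)"
        then obtain e where e: "e \<in> hom A (U c1)" "x = \<chi>' e" by blast
        have "cmp u e \<in> hom A (U c)" using comp[OF A UOb[OF c1] UOb[OF c] e(1) uh] .
        then show "x \<in> {..<k}" using chi e unfolding \<chi>'_def by blast
      qed
      then obtain v1 where v1: "v1 \<in> hom' b c1"
        and cv1: "card (\<chi>' ` (cmp v1 ` (\<Union>a\<in>G. hom' a b))) \<le> sum t G"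
        using H1 by blast
      define v where "v = cmp u v1"
      have v: "v \<in> hom' b c" unfolding v_def using comp'[OF b c1 c v1 u] .
      have as: "cmp v e = cmp u (cmp v1 e)" if "x \<in> Ob'" "e \<in> hom' x b" for x e
        unfolding v_def using assoc'[OF that(1) b c1 c that(2) v1 u] by simp
      have eq: "\<chi> ` (cmp v ` (\<Union>x\<in>insert a G. hom' x b)) =
          \<chi> ` (cmp v ` hom' a b) \<union> \<chi>' ` (cmp v1 ` (\<Union>x\<in>G. hom' x b))"
      proof -
        have "\<chi> ` (cmp v ` (\<Union>x\<in>G. hom' x b)) = \<chi>' ` (cmp v1 ` (\<Union>x\<in>G. hom' x b))"
        proof -
          have "\<forall>x\<in>G. x \<in> Ob'" using insert.prems unfolding fiber_def by auto
          then show ?thesis unfolding \<chi>'_def image_image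
          proof (intro image_cong refl)
            fix e assume "\<forall>x\<in>G. x \<in> Ob'" "e \<in> (\<Union>x\<in>G. hom' x b)"
            then show "\<chi> (cmp v e) = \<chi> (cmp u (cmp v1 e))" using as by fastforce
          qed
        qed
        then show ?thesis by (simp only: UN_insert image_Un)
      qed
      have s1: "\<chi> ` (cmp v ` hom' a b) \<subseteq> \<chi> ` (cmp u ` hom' a c1)"
      proof
        fix x assume "x \<in> \<chi> ` (cmp v ` hom' a b)"
        then obtain e where e: "e \<in> hom' a b" "x = \<chi> (cmp v e)" by blast
        have "cmp v1 e \<in> hom' a c1" using comp'[OF aO(1) b c1 e(1) v1] .
        then show "x \<in> \<chi> ` (cmp u ` hom' a c1)" using e as[OF aO(1) e(1)] by blast
      qed
      have "\<chi> ` (cmp u ` hom' a c1) \<subseteq> {..<k}"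
        using chi comp'[OF aO(1) c1 c _ u] sub[OF aO(1) c] aO(2) by blast
      then have fin1: "finite (\<chi> ` (cmp u ` hom' a c1))" using finite_subset by blast
      have "card (\<chi> ` (cmp v ` hom' a b)) \<le> t a"
        using card_mono[OF fin1 s1] cu by linarith
      then have "card (\<chi> ` (cmp v ` (\<Union>x\<in>insert a G. hom' x b))) \<le> t a + sum t G"
        unfolding eq using card_Un_le cv1 by (meson add_mono le_trans)
      then show "\<exists>v\<in>hom' b c. card (\<chi> ` (cmp v ` (\<Union>a\<in>insert a G. hom' a b))) \<le> sum t (insert a G)"
        using v insert.hyps by auto
    qed (rule c)
  qed
qed

lemma upper:
  assumes A: "A \<in> Ob" and fin: "finite (fiber Ob' U A)"
    and good: "\<forall>a\<in>fiber Ob' U A. ramsey_good Ob' hom' cmp a (t a)"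
  shows "ramsey_good Ob hom cmp A (sum t (fiber Ob' U A))"
  unfolding ramsey_good_def
proof (intro allI impI ballI)
  fix k :: nat and B assume k: "k \<ge> 2" and B: "B \<in> Ob"
  obtain b where b: "b \<in> Ob'" "U b = B" using surjU[OF B] by blast
  obtain c where c: "c \<in> Ob'" and H: "\<forall>\<chi>. \<chi> ` hom A (U c) \<subseteq> {..<k} \<longrightarrow>
     (\<exists>v\<in>hom' b c. card (\<chi> ` (cmp v ` (\<Union>a\<in>fiber Ob' U A. hom' a b))) \<le> sum t (fiber Ob' U A))"
    using chain[OF A fin subset_refl good k] b by blast
  show "\<exists>C\<in>Ob. ramsey_arrow hom cmp C B A k (sum t (fiber Ob' U A))"
  proof (intro bexI[of _ "U c"])
    show "U c \<in> Ob" using UOb[OF c] .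
    show "ramsey_arrow hom cmp (U c) B A k (sum t (fiber Ob' U A))"
      unfolding ramsey_arrow_def
    proof (intro allI impI)
      fix \<chi> :: "'m \<Rightarrow> nat" assume chi: "\<chi> ` hom A (U c) \<subseteq> {..<k}"
      then obtain v where v: "v \<in> hom' b c"
        and cv: "card (\<chi> ` (cmp v ` (\<Union>a\<in>fiber Ob' U A. hom' a b))) \<le> sum t (fiber Ob' U A)"
        using H by blast
      have vh: "v \<in> hom B (U c)" using v sub[OF b(1) c] b by blast
      have hs: "hom A B \<subseteq> (\<Union>a\<in>fiber Ob' U A. hom' a b)"
      proof
        fix e assume "e \<in> hom A B"
        then show "e \<in> (\<Union>a\<in>fiber Ob' U A. hom' a b)" using UR[OF b(1) A] b by blast
      qed
      have "\<chi> ` (cmp v ` (\<Union>a\<in>fiber Ob' U A. hom' a b)) \<subseteq> \<chi> ` hom A (U c)"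
      proof
        fix x assume "x \<in> \<chi> ` (cmp v ` (\<Union>a\<in>fiber Ob' U A. hom' a b))"
        then obtain a e where ae: "a \<in> fiber Ob' U A" "e \<in> hom' a b" "x = \<chi> (cmp v e)" by blast
        then have "e \<in> hom A B" using sub[OF _ b(1)] b unfolding fiber_def by blast
        then have "cmp v e \<in> hom A (U c)" using comp[OF A B UOb[OF c] _ vh] by blast
        then show "x \<in> \<chi> ` hom A (U c)" using ae by blast
      qed
      then have "finite (\<chi> ` (cmp v ` (\<Union>a\<in>fiber Ob' U A. hom' a b)))"
        using chi finite_subset by (metis finite_lessThan subset_trans)
      then have "card (\<chi> ` (cmp v ` hom A B)) \<le> sum t (fiber Ob' U A)"
        using card_mono[of _ "\<chi> ` (cmp v ` hom A B)"] hs cv by (meson image_mono le_trans)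
      then show "\<exists>w\<in>hom B (U c). card (\<chi> ` (cmp w ` hom A B)) \<le> sum t (fiber Ob' U A)"
        using vh by blast
    qed
  qed
qed

definition wit :: "'p \<Rightarrow> nat \<Rightarrow> nat \<Rightarrow> 'p \<Rightarrow> bool" where
  "wit a s k b \<longleftrightarrow> (\<forall>c\<in>Ob'. \<exists>\<chi>::'m\<Rightarrow>nat. \<chi> ` hom' a c \<subseteq> {..<k} \<and>
      (\<forall>w\<in>hom' b c. s \<le> card (\<chi> ` (cmp w ` hom' a b))))"

lemma witness:
  assumes a: "a \<in> Ob'" and s: "s \<ge> 1" and h: "s = 1 \<or> \<not> ramsey_good Ob' hom' cmp a (s - 1)"
  shows "\<exists>k b. b \<in> Ob' \<and> wit a s k b"
  using h
proof
  assume s1: "s = 1"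
  obtain b where b: "b \<in> Ob'" "arr hom' a b" using dir a unfolding directed_def by blast
  have "wit a s 1 b" unfolding wit_def
  proof
    fix c assume "c \<in> Ob'"
    have "\<forall>w\<in>hom' b c. s \<le> card ((\<lambda>_. 0::nat) ` (cmp w ` hom' a b))"
    proof
      fix w assume "w \<in> hom' b c"
      have "cmp w ` hom' a b \<noteq> {}" using b(2) unfolding arr_def by blast
      then have "(\<lambda>_. 0::nat) ` (cmp w ` hom' a b) = {0}" by blast
      then show "s \<le> card ((\<lambda>_. 0::nat) ` (cmp w ` hom' a b))" using s1 by simp
    qed
    moreover have "(\<lambda>_. 0::nat) ` hom' a c \<subseteq> {..<1}" by auto
    ultimately show "\<exists>\<chi>::'m\<Rightarrow>nat. \<chi> ` hom' a c \<subseteq> {..<1} \<and> (\<forall>w\<in>hom' b c. s \<le> card (\<chi> ` (cmp w ` hom' a b)))"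
      by blast
  qed
  then show ?thesis using b by blast
next
  assume "\<not> ramsey_good Ob' hom' cmp a (s - 1)"
  then obtain k B where B: "B \<in> Ob'" and H: "\<forall>C\<in>Ob'. \<not> ramsey_arrow hom' cmp C B a k (s - 1)"
    unfolding ramsey_good_def by blast
  have "wit a s k B" unfolding wit_def
  proof
    fix c assume "c \<in> Ob'"
    then have "\<not> ramsey_arrow hom' cmp c B a k (s - 1)" using H by blast
    then obtain \<chi> :: "'m \<Rightarrow> nat" where "\<chi> ` hom' a c \<subseteq> {..<k}"
      "\<forall>w\<in>hom' B c. \<not> card (\<chi> ` (cmp w ` hom' a B)) \<le> s - 1"
      unfolding ramsey_arrow_def by blast
    then show "\<exists>\<chi>::'m\<Rightarrow>nat. \<chi> ` hom' a c \<subseteq> {..<k} \<and> (\<forall>w\<in>hom' B c. s \<le> card (\<chi> ` (cmp w ` hom' a B)))"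
      using s by (intro exI[of _ \<chi>]) auto
  qed
  then show ?thesis using B by blast
qed

lemma wit_lift:
  assumes a: "a \<in> Ob'" and b0: "b0 \<in> Ob'" and b: "b \<in> Ob'" and ar: "arr hom' b0 b"
    and w: "wit a s k b0"
  shows "wit a s k b"
  unfolding wit_def
proof
  fix c assume c: "c \<in> Ob'"
  obtain g where g: "g \<in> hom' b0 b" using ar unfolding arr_def by blast
  obtain \<chi> :: "'m \<Rightarrow> nat" where chi: "\<chi> ` hom' a c \<subseteq> {..<k}"
    and H: "\<forall>w\<in>hom' b0 c. s \<le> card (\<chi> ` (cmp w ` hom' a b0))"
    using w c unfolding wit_def by blast
  show "\<exists>\<chi>::'m\<Rightarrow>nat. \<chi> ` hom' a c \<subseteq> {..<k} \<and> (\<forall>w\<in>hom' b c. s \<le> card (\<chi> ` (cmp w ` hom' a b)))"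
  proof (intro exI[of _ \<chi>] conjI ballI chi)
    fix w assume wh: "w \<in> hom' b c"
    have wg: "cmp w g \<in> hom' b0 c" using comp'[OF b0 b c g wh] .
    have ss: "\<chi> ` (cmp (cmp w g) ` hom' a b0) \<subseteq> \<chi> ` (cmp w ` hom' a b)"
    proof
      fix x assume "x \<in> \<chi> ` (cmp (cmp w g) ` hom' a b0)"
      then obtain e where e: "e \<in> hom' a b0" "x = \<chi> (cmp (cmp w g) e)" by blast
      have "cmp (cmp w g) e = cmp w (cmp g e)" using assoc'[OF a b0 b c e(1) g wh] by simp
      moreover have "cmp g e \<in> hom' a b" using comp'[OF a b0 b e(1) g] .
      ultimately show "x \<in> \<chi> ` (cmp w ` hom' a b)" using e by blast
    qed
    have "\<chi> ` (cmp w ` hom' a b) \<subseteq> {..<k}" using chi comp'[OF a b c _ wh] by blast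
    then have "finite (\<chi> ` (cmp w ` hom' a b))" using finite_subset by blast
    then show "s \<le> card (\<chi> ` (cmp w ` hom' a b))"
      using card_mono[OF _ ss] H wg by (meson le_trans)
  qed
qed


lemma ex1_same: "\<exists>!z. P z \<Longrightarrow> P x \<Longrightarrow> P y \<Longrightarrow> x = y" by blast

lemma enc_lt: "i < n \<Longrightarrow> x < K \<Longrightarrow> i*K + x < n*(K::nat)"
proof -
  assume "i < n" "x < K"
  then have "i*K + x < (Suc i)*K" by simp
  also have "\<dots> \<le> n*K" using \<open>i < n\<close> by (intro mult_le_mono1) simp
  finally show ?thesis .
qed

lemma enc_inj: "x < K \<Longrightarrow> y < K \<Longrightarrow> i*K + x = j*K + (y::nat) \<Longrightarrow> i = j"
proof -
  assume h: "x < K" "y < K" "i*K + x = j*K + y"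
  have "(i*K + x) div K = i" using h(1) by simp
  moreover have "(j*K + y) div K = j" using h(2) by simp
  ultimately show ?thesis using h(3) by simp
qed

lemma lower:
  assumes A: "A \<in> Ob" and goodA: "ramsey_good Ob hom cmp A n"
    and fin: "finite G" and G: "G \<subseteq> fiber Ob' U A"
    and sG: "\<forall>a\<in>G. 1 \<le> s a \<and> (s a = 1 \<or> \<not> ramsey_good Ob' hom' cmp a (s a - 1))"
  shows "sum s G \<le> n"
proof -
  have GO: "\<forall>a\<in>G. a \<in> Ob' \<and> U a = A" using G unfolding fiber_def by blast
  have "\<forall>a\<in>G. \<exists>k b. b \<in> Ob' \<and> wit a (s a) k b"
  proof
    fix a assume a: "a \<in> G"
    show "\<exists>k b. b \<in> Ob' \<and> wit a (s a) k b" using witness[of a "s a"] GO sG a by simp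
  qed
  from bchoice[OF this] obtain kf where "\<forall>a\<in>G. \<exists>b. b \<in> Ob' \<and> wit a (s a) (kf a) b" by (elim exE)
  from bchoice[OF this] obtain bf where bf: "\<forall>a\<in>G. bf a \<in> Ob' \<and> wit a (s a) (kf a) (bf a)" by (elim exE)
  have Ob'ne: "Ob' \<noteq> {}" using surjU[OF A] by blast
  obtain b where b: "b \<in> Ob'" "\<forall>x\<in>bf ` G. arr hom' x b"
    using dir_fin[of "bf ` G"] fin bf Ob'ne by blast
  have wb: "\<forall>a\<in>G. wit a (s a) (kf a) b"
  proof
    fix a assume a: "a \<in> G"
    show "wit a (s a) (kf a) b"
      by (rule wit_lift[of a "bf a" b]) (use a GO bf b in auto)
  qed
  have "\<forall>a\<in>G. \<exists>g. \<forall>c\<in>Ob'. g c ` hom' a c \<subseteq> {..<kf a} \<and>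
      (\<forall>w\<in>hom' b c. s a \<le> card (g c ` (cmp w ` hom' a b)))"
  proof
    fix a assume "a \<in> G"
    then have "\<forall>c\<in>Ob'. \<exists>\<chi>::'m\<Rightarrow>nat. \<chi> ` hom' a c \<subseteq> {..<kf a} \<and>
      (\<forall>w\<in>hom' b c. s a \<le> card (\<chi> ` (cmp w ` hom' a b)))" using wb unfolding wit_def by blast
    then show "\<exists>g. \<forall>c\<in>Ob'. g c ` hom' a c \<subseteq> {..<kf a} \<and>
      (\<forall>w\<in>hom' b c. s a \<le> card (g c ` (cmp w ` hom' a b)))" by (rule bchoice)
  qed
  from bchoice[OF this] obtain \<chi>f where chif: "\<forall>a\<in>G. \<forall>c\<in>Ob'. \<chi>f a c ` hom' a c \<subseteq> {..<kf a} \<and>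
      (\<forall>w\<in>hom' b c. s a \<le> card (\<chi>f a c ` (cmp w ` hom' a b)))" by (elim exE)
  define K where "K = sum kf G"
  have kK: "\<forall>a\<in>G. kf a \<le> K" unfolding K_def using fin by (simp add: member_le_sum)
  obtain idx where idx: "bij_betw idx G {0..<card G}" using ex_bij_betw_finite_nat[OF fin] by blast
  have idxlt: "\<forall>a\<in>G. idx a < card G" using idx unfolding bij_betw_def by auto
  have idxinj: "inj_on idx G" using idx unfolding bij_betw_def by auto
  define k where "k = card G * K + 2"
  have k2: "k \<ge> 2" unfolding k_def by simp
  define B where "B = U b"
  have B: "B \<in> Ob" unfolding B_def using UOb[OF b(1)] .
  obtain D where D: "D \<in> Ob" and EPD: "\<forall>b'\<in>fiber Ob' U B. \<forall>d\<in>fiber Ob' U D. arr hom' b' d"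
    using ep B unfolding expansion_property_def by blast
  obtain C where C: "C \<in> Ob" and RA: "ramsey_arrow hom cmp C D A k n"
    using goodA k2 D unfolding ramsey_good_def by blast
  obtain c where c: "c \<in> Ob'" "U c = C" using surjU[OF C] by blast
  define \<chi> where "\<chi> = (\<lambda>e. if \<exists>a\<in>G. e \<in> hom' a c
     then (let a = SOME a. a \<in> G \<and> e \<in> hom' a c in idx a * K + \<chi>f a c e) else card G * K)"
  have chieq: "\<chi> e = idx a * K + \<chi>f a c e" if a: "a \<in> G" "e \<in> hom' a c" for a e
  proof -
    define a' where "a' = (SOME a. a \<in> G \<and> e \<in> hom' a c)"
    have "a' \<in> G \<and> e \<in> hom' a' c" unfolding a'_def by (rule someI[of _ a]) (use a in simp)
    then have a': "a' \<in> G" "e \<in> hom' a' c" by auto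
    have aO: "a \<in> Ob'" "U a = A" using GO a(1) by auto
    have "e \<in> hom (U a) (U c)" using sub[OF aO(1) c(1)] a(2) by blast
    then have eh: "e \<in> hom A (U c)" using aO(2) by simp
    have f1: "a \<in> fiber Ob' U A" "a' \<in> fiber Ob' U A" using a a' G by auto
    have "a' = a" using ex1_same[OF UR[OF c(1) A eh]] f1 a(2) a'(2) by blast
    have ex: "\<exists>a\<in>G. e \<in> hom' a c" using a by blast
    have "\<chi> e = idx a' * K + \<chi>f a' c e" unfolding \<chi>_def a'_def Let_def using ex by (simp only: if_True)
    then show ?thesis using \<open>a' = a\<close> by (simp only:)
  qed
  have chik: "\<chi> ` hom A C \<subseteq> {..<k}"
  proof
    fix x assume "x \<in> \<chi> ` hom A C"
    then obtain e where e: "e \<in> hom A C" "x = \<chi> e" by blast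
    show "x \<in> {..<k}"
    proof (cases "\<exists>a\<in>G. e \<in> hom' a c")
      case True
      then obtain a where a: "a \<in> G" "e \<in> hom' a c" by blast
      have "\<chi>f a c e < K" using chif a c kK by fastforce
      then have "idx a * K + \<chi>f a c e < card G * K" using enc_lt[of "idx a" "card G" "\<chi>f a c e" K] idxlt a by blast
      then show ?thesis using chieq[OF a] e unfolding k_def by simp
    next
      case False
      then show ?thesis using e unfolding \<chi>_def k_def by simp
    qed
  qed
  then obtain w where w: "w \<in> hom D C" and cw: "card (\<chi> ` (cmp w ` hom A D)) \<le> n"
    using RA unfolding ramsey_arrow_def by blast
  obtain d where d: "d \<in> fiber Ob' U D" "w \<in> hom' d c" using UR[OF c(1) D] w c by blast
  have dO: "d \<in> Ob'" "U d = D" using d unfolding fiber_def by auto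
  have bB: "b \<in> fiber Ob' U B" using b unfolding fiber_def B_def by auto
  obtain f where f: "f \<in> hom' b d" using EPD bB d unfolding arr_def by blast
  define v where "v = cmp w f"
  have v: "v \<in> hom' b c" unfolding v_def using comp'[OF b(1) dO(1) c(1) f d(2)] .
  define S where "S = (\<lambda>a. \<chi> ` (cmp v ` hom' a b))"
  have finbig: "finite (\<chi> ` (cmp w ` hom A D))"
  proof -
    have "\<chi> ` (cmp w ` hom A D) \<subseteq> \<chi> ` hom A C" using comp[OF A D C _ w] by blast
    then have "\<chi> ` (cmp w ` hom A D) \<subseteq> {..<k}" using chik by blast
    then show ?thesis using finite_subset by blast
  qed
  have Ssub: "S a \<subseteq> \<chi> ` (cmp w ` hom A D)" if a: "a \<in> G" for a
  proof
    fix x assume "x \<in> S a"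
    then obtain e where e: "e \<in> hom' a b" "x = \<chi> (cmp v e)" unfolding S_def by blast
    have aO: "a \<in> Ob'" "U a = A" using GO a by auto
    have "cmp v e = cmp w (cmp f e)" unfolding v_def using assoc'[OF aO(1) b(1) dO(1) c(1) e(1) f d(2)] by simp
    moreover have "cmp f e \<in> hom A D" using comp'[OF aO(1) b(1) dO(1) e(1) f] sub[OF aO(1) dO(1)] aO dO by blast
    ultimately show "x \<in> \<chi> ` (cmp w ` hom A D)" using e by blast
  qed
  have Sfin: "finite (S a)" if "a \<in> G" for a using Ssub[OF that] finbig finite_subset by blast
  have Seq: "S a = (\<lambda>x. idx a * K + x) ` (\<chi>f a c ` (cmp v ` hom' a b))" if a: "a \<in> G" for a
  proof -
    have aO: "a \<in> Ob'" using GO a by auto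
    have "\<forall>e\<in>hom' a b. cmp v e \<in> hom' a c" using comp'[OF aO b(1) c(1) _ v] by blast
    then show ?thesis unfolding S_def image_image using chieq[OF a] by (auto intro!: image_cong)
  qed
  have Sbig: "s a \<le> card (S a)" if a: "a \<in> G" for a
  proof -
    have "s a \<le> card (\<chi>f a c ` (cmp v ` hom' a b))" using chif a c v by blast
    also have "\<dots> = card (S a)" unfolding Seq[OF a] by (simp add: card_image)
    finally show ?thesis .
  qed
  have Slt: "\<forall>y\<in>\<chi>f a c ` (cmp v ` hom' a b). y < K" if a: "a \<in> G" for a
  proof -
    have aO: "a \<in> Ob'" using GO a by auto
    have "\<forall>e\<in>hom' a b. cmp v e \<in> hom' a c" using comp'[OF aO b(1) c(1) _ v] by blast
    then show ?thesis using chif a c kK by fastforce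
  qed
  have Sdisj: "\<forall>a\<in>G. \<forall>a'\<in>G. a \<noteq> a' \<longrightarrow> S a \<inter> S a' = {}"
  proof (intro ballI impI)
    fix a a' assume a: "a \<in> G" and a': "a' \<in> G" and ne: "a \<noteq> a'"
    have "idx a \<noteq> idx a'" using idxinj a a' ne unfolding inj_on_def by blast
    show "S a \<inter> S a' = {}"
    proof (rule ccontr)
      assume "S a \<inter> S a' \<noteq> {}"
      then obtain x y where xy: "x \<in> \<chi>f a c ` (cmp v ` hom' a b)" "y \<in> \<chi>f a' c ` (cmp v ` hom' a' b)"
        "idx a * K + x = idx a' * K + y" unfolding Seq[OF a] Seq[OF a'] by blast
      have "x < K" "y < K" using Slt[OF a] Slt[OF a'] xy by auto
      then have "idx a = idx a'" using enc_inj[of x K y "idx a" "idx a'"] xy(3) by blast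
      then show False using \<open>idx a \<noteq> idx a'\<close> by simp
    qed
  qed
  have "sum s G \<le> sum (\<lambda>a. card (S a)) G" using Sbig by (simp add: sum_mono)
  also have "\<dots> = card (\<Union>a\<in>G. S a)" using card_UN_disjoint[OF fin, of S] Sfin Sdisj by simp
  also have "\<dots> \<le> card (\<chi> ` (cmp w ` hom A D))" using Ssub finbig by (intro card_mono) auto
  also have "\<dots> \<le> n" using cw .
  finally show ?thesis .
qed

end

lemma sum_enat_nat: "finite F \<Longrightarrow> (\<Sum>a\<in>F. enat (s a)) = enat (sum s F)"
  by (induction F rule: finite_induct) (auto simp: zero_enat_def)

theorem theorem6p3:
  fixes Ob :: "'o set" and hom :: "'o \<Rightarrow> 'o \<Rightarrow> 'm set"
    and cmp :: "'m \<Rightarrow> 'm \<Rightarrow> 'm" and idm :: "'o \<Rightarrow> 'm"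
    and Ob' :: "'p set" and hom' :: "'p \<Rightarrow> 'p \<Rightarrow> 'm set" and U :: "'p \<Rightarrow> 'o"
  assumes "expansion Ob hom cmp idm Ob' hom' U"
    and "reasonable Ob hom Ob' hom' U"
    and "unique_restrictions Ob hom Ob' hom' U"
    and "expansion_property Ob Ob' hom' U"
    and "all_mono Ob hom cmp"
    and "directed Ob' hom'"
    and "A \<in> Ob"
  shows "ramsey_degree Ob hom cmp A
           = esum (\<lambda>a. ramsey_degree Ob' hom' cmp a) (fiber Ob' U A)
     \<and> (ramsey_degree Ob hom cmp A < \<infinity> \<longleftrightarrow>
          finite (fiber Ob' U A) \<and> (\<forall>a\<in>fiber Ob' U A. ramsey_degree Ob' hom' cmp a < \<infinity>))"
proof -
  interpret ctx Ob hom cmp idm Ob' hom' U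
    using assms by unfold_locales
  have A: "A \<in> Ob" by fact
  define F where "F = fiber Ob' U A"
  define t where "t = (\<lambda>a. ramsey_degree Ob' hom' cmp a)"
  have Fne: "F \<noteq> {}" using surjU[OF A] unfolding F_def fiber_def by blast
  show ?thesis
  proof (cases "finite F \<and> (\<forall>a\<in>F. t a < \<infinity>)")
    case True
    then have fin: "finite F" and tf: "\<forall>a\<in>F. t a < \<infinity>" by auto
    define s where "s = (\<lambda>a. LEAST n. n > 0 \<and> ramsey_good Ob' hom' cmp a n)"
    have sP: "0 < s a \<and> ramsey_good Ob' hom' cmp a (s a) \<and> t a = enat (s a)
       \<and> (s a = 1 \<or> \<not> ramsey_good Ob' hom' cmp a (s a - 1))" if a: "a \<in> F" for a
    proof -
      have ex: "\<exists>n>0. ramsey_good Ob' hom' cmp a n"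
        using tf a unfolding t_def ramsey_degree_def by (auto split: if_splits)
      have L: "0 < s a \<and> ramsey_good Ob' hom' cmp a (s a)"
        unfolding s_def using LeastI_ex[of "\<lambda>n. n > 0 \<and> ramsey_good Ob' hom' cmp a n"] ex by blast
      have "t a = enat (s a)" unfolding t_def ramsey_degree_def s_def using ex by simp
      moreover have "s a = 1 \<or> \<not> ramsey_good Ob' hom' cmp a (s a - 1)"
      proof (cases "s a = 1")
        case False
        then have "s a - 1 < s a" "s a - 1 > 0" using L by auto
        then show ?thesis using not_less_Least[of "s a - 1" "\<lambda>n. n > 0 \<and> ramsey_good Ob' hom' cmp a n"]
          unfolding s_def by blast
      qed simp
      ultimately show ?thesis using L by blast
    qed
    have esum: "esum t F = enat (sum s F)"
    proof -
      have "esum t F = (\<Sum>a\<in>F. enat (s a))" unfolding esum_def using fin sP by (simp cong: sum.cong)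
      then show ?thesis using sum_enat_nat[OF fin] by simp
    qed
    have gA: "ramsey_good Ob hom cmp A (sum s F)"
      using upper[OF A fin[unfolded F_def], of s] sP unfolding F_def by blast
    obtain a0 where a0: "a0 \<in> F" using Fne by blast
    have "s a0 \<le> sum s F" using member_le_sum[OF a0 _ fin, of s] by simp
    then have pos: "sum s F > 0" using sP[OF a0] by linarith
    define m where "m = (LEAST n. n > 0 \<and> ramsey_good Ob hom cmp A n)"
    have exA: "\<exists>n>0. ramsey_good Ob hom cmp A n" using gA pos by blast
    have tA: "ramsey_degree Ob hom cmp A = enat m" unfolding ramsey_degree_def m_def using exA by simp
    have mle: "m \<le> sum s F" unfolding m_def using gA pos by (simp add: Least_le)
    have "ramsey_good Ob hom cmp A m"
      unfolding m_def using LeastI_ex[of "\<lambda>n. n > 0 \<and> ramsey_good Ob hom cmp A n"] exA by blast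
    moreover have "F \<subseteq> fiber Ob' U A" unfolding F_def by simp
    moreover have "\<forall>a\<in>F. 1 \<le> s a \<and> (s a = 1 \<or> \<not> ramsey_good Ob' hom' cmp a (s a - 1))"
      using sP by (simp add: Suc_le_eq)
    ultimately have "sum s F \<le> m" using lower[OF A _ fin] by blast
    then have "m = sum s F" using mle by simp
    then show ?thesis using tA esum True unfolding F_def t_def by simp
  next
    case False
    have tA: "ramsey_degree Ob hom cmp A = \<infinity>"
    proof (rule ccontr)
      assume "ramsey_degree Ob hom cmp A \<noteq> \<infinity>"
      then obtain n where n: "n > 0" "ramsey_good Ob hom cmp A n"
        unfolding ramsey_degree_def by (auto split: if_splits)
      show False
      proof (cases "finite F")
        case False
        then obtain G where G: "finite G" "card G = Suc n" "G \<subseteq> F"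
          using infinite_arbitrarily_large by blast
        have "sum (\<lambda>_. 1::nat) G \<le> n"
          using lower[OF A n(2) G(1), of "\<lambda>_. 1"] G(3) unfolding F_def by simp
        then show False using G(2) by simp
      next
        case True
        then obtain a where a: "a \<in> F" "\<not> t a < \<infinity>" using \<open>\<not> (finite F \<and> (\<forall>a\<in>F. t a < \<infinity>))\<close> by blast
        then have "\<not> (\<exists>m>0. ramsey_good Ob' hom' cmp a m)"
          unfolding t_def ramsey_degree_def by (auto split: if_splits)
        then have "\<not> ramsey_good Ob' hom' cmp a n" using n(1) by blast
        then have "sum (\<lambda>_. Suc n) {a} \<le> n"
          using lower[OF A n(2), of "{a}" "\<lambda>_. Suc n"] a(1) unfolding F_def by simp
        then show False by simp
      qed
    qed
    have es: "esum t F = \<infinity>"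
    proof (cases "finite F")
      case True
      then obtain a where a: "a \<in> F" "\<not> t a < \<infinity>" using False by blast
      have "t a \<le> sum t F" using member_le_sum[OF a(1) _ True, of t] by simp
      then show ?thesis unfolding esum_def using a True by simp
    qed (simp add: esum_def)
    show ?thesis using tA es False unfolding F_def t_def by simp
  qed
qed

end
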